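(* Let $\alpha\in\mathbb{R}$ and $\beta\in\mathbb{R}\setminus\mathbb{Z}$, and define, with $\sigma_{\alpha,\beta}(z)=[(1+\alpha+\beta)^2+4z]^{1/2}$, $$\widehat m_{\alpha,\beta}(z)=\frac{-\Gamma(1-\beta)}{2^{1+\alpha+\beta}\beta\Gamma(1+\beta)}\,\frac{\Gamma([1+\alpha+\beta+\sigma_{\alpha,\beta}(z)]/2)\,\Gamma([1+\alpha+\beta-\sigma_{\alpha,\beta}(z)]/2)}{\Gamma([1+\alpha-\beta+\sigma_{\alpha,\beta}(z)]/2)\,\Gamma([1+\alpha-\beta-\sigma_{\alpha,\beta}(z)]/2)},$$ for $z\in\mathbb{C}\setminus\{n(n+1+\alpha+\beta)\}_{n\in\mathbb{N}_0}$. Then $\widehat m_{\alpha,\beta}$ has the Nevanlinna--Herglotz property if and only if $\alpha\in(-\mathbb{N})\cup(-1,\infty)$ and $\beta\in(-1,0)\cup(0,1)$.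
   Context: A function $m$ has the Nevanlinna--Herglotz property if it is analytic in the open upper half-plane $\mathbb{C}_+$ and satisfies $\operatorname{Im}(m(z))>0$ for all $z\in\mathbb{C}_+$. The expression defining $\widehat m_{\alpha,\beta}$ is even in $\sigma_{\alpha,\beta}(z)$, so the branch of the square root is irrelevant. $\mathbb{N}_0=\mathbb{N}\cup\{0\}$. *)

theory Defs
  imports "HOL-Analysis.Analysis"
begin

definition sigma_ab :: "real \<Rightarrow> real \<Rightarrow> complex \<Rightarrow> complex" where
  "sigma_ab \<alpha> \<beta> z = csqrt ((complex_of_real (1 + \<alpha> + \<beta>))\<^sup>2 + 4 * z)"

definition m_hat :: "real \<Rightarrow> real \<Rightarrow> complex \<Rightarrow> complex" where
  "m_hat \<alpha> \<beta> z =
     (- Gamma (complex_of_real (1 - \<beta>)) /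
       (complex_of_real (2 powr (1 + \<alpha> + \<beta>) * \<beta>) * Gamma (complex_of_real (1 + \<beta>))))
     * (Gamma ((complex_of_real (1 + \<alpha> + \<beta>) + sigma_ab \<alpha> \<beta> z) / 2)
        * Gamma ((complex_of_real (1 + \<alpha> + \<beta>) - sigma_ab \<alpha> \<beta> z) / 2))
     / (Gamma ((complex_of_real (1 + \<alpha> - \<beta>) + sigma_ab \<alpha> \<beta> z) / 2)
        * Gamma ((complex_of_real (1 + \<alpha> - \<beta>) - sigma_ab \<alpha> \<beta> z) / 2))"

definition nevanlinna_herglotz :: "(complex \<Rightarrow> complex) \<Rightarrow> bool" where
  "nevanlinna_herglotz m \<longleftrightarrow>
     m analytic_on {z. Im z > 0} \<and> (\<forall>z. Im z > 0 \<longrightarrow> Im (m z) > 0)"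

end

theory Submission
  imports Defs
begin

definition lamv :: "real \<Rightarrow> nat \<Rightarrow> real" where
  "lamv h n = real n * (real n + 2*h)"
definition muv :: "real \<Rightarrow> real \<Rightarrow> nat \<Rightarrow> real" where
  "muv h b n = (real n - b) * (real n - b + 2*h)"
definition phi :: "complex \<Rightarrow> real \<Rightarrow> real" where
  "phi z q = arctan ((q - Re z) / Im z)"

lemma factor_cis:
  assumes "Im z > 0"
  shows "complex_of_real q - z = complex_of_real (cmod (complex_of_real q - z)) * (- \<i>) * cis (phi z q)"
proof -
  define a where "a = (q - Re z) / Im z"
  define S where "S = sqrt (1 + a^2)"
  have S0: "S > 0" unfolding S_def by (simp add: add_pos_nonneg)
  have qa: "q - Re z = a * Im z" using assms unfolding a_def by simp
  have "cmod (complex_of_real q - z) = sqrt ((q - Re z)^2 + (Im z)^2)"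
    by (simp add: cmod_def)
  also have "(q - Re z)^2 + (Im z)^2 = (Im z)^2 * (1 + a^2)"
    unfolding qa by (simp add: algebra_simps power_mult_distrib)
  also have "sqrt \<dots> = Im z * S" using assms unfolding S_def by (simp add: real_sqrt_mult)
  finally have cm: "cmod (complex_of_real q - z) = Im z * S" .
  have c: "cos (arctan a) = 1 / S" and s: "sin (arctan a) = a / S"
    unfolding S_def by (simp_all add: cos_arctan sin_arctan)
  show ?thesis
    unfolding cm phi_def a_def[symmetric]
    using S0 qa by (simp add: complex_eq_iff c s field_simps)
qed

lemma ratio_cis:
  assumes "Im z > 0"
  shows "(complex_of_real q1 - z) / (complex_of_real q2 - z) =
     complex_of_real (cmod (complex_of_real q1 - z) / cmod (complex_of_real q2 - z)) * cis (phi z q1 - phi z q2)"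
proof -
  have ne: "complex_of_real q2 - z \<noteq> 0" using assms by (auto simp: complex_eq_iff)
  hence ne2: "cmod (complex_of_real q2 - z) \<noteq> 0" by simp
  show ?thesis
    apply (subst (1) factor_cis[OF assms, of q1])
    apply (subst (1) factor_cis[OF assms, of q2])
    using ne2 by (simp add: field_simps cis_divide[symmetric])
qed

lemma lam_fact:
  assumes "u + v = complex_of_real (2*h)" "u * v = - z"
  shows "(u + of_nat n) * (v + of_nat n) = complex_of_real (lamv h n) - z"
proof -
  have "(u + of_nat n) * (v + of_nat n) = of_nat n * of_nat n + (u + v) * of_nat n + u * v"
    by (simp add: algebra_simps)
  also have "\<dots> = complex_of_real (lamv h n) - z" using assms
    by (simp add: lamv_def algebra_simps)
  finally show ?thesis .
qed

lemma mu_fact: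
  assumes "u + v = complex_of_real (2*h)" "u * v = - z"
  shows "(u - of_real b + of_nat n) * (v - of_real b + of_nat n) = complex_of_real (muv h b n) - z"
proof -
  have "(u - of_real b + of_nat n) * (v - of_real b + of_nat n) =
     (of_nat n - of_real b) * (of_nat n - of_real b) + (u + v) * (of_nat n - of_real b) + u * v"
    by (simp add: algebra_simps)
  also have "\<dots> = complex_of_real (muv h b n) - z" using assms
    by (simp add: muv_def algebra_simps)
  finally show ?thesis .
qed

lemma gamma_series_ratio:
  assumes uv: "u + v = complex_of_real (2*h)" "u * v = - z"
  assumes nz: "\<And>n. u + of_nat n \<noteq> 0" "\<And>n. v + of_nat n \<noteq> 0"
     "\<And>n. u - of_real b + of_nat n \<noteq> 0" "\<And>n. v - of_real b + of_nat n \<noteq> 0"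
  shows "Gamma_series u N * Gamma_series v N / (Gamma_series (u - of_real b) N * Gamma_series (v - of_real b) N)
    = complex_of_real (exp (2*b*ln (real N))) *
      (\<Prod>n<Suc N. (complex_of_real (muv h b n) - z) / (complex_of_real (lamv h n) - z))"
proof -
  define L where "L = complex_of_real (ln (real N))"
  have e: "exp (u * L) * exp (v * L) / (exp ((u - of_real b) * L) * exp ((v - of_real b) * L))
       = complex_of_real (exp (2*b*ln (real N)))"
  proof -
    have "exp (u * L) * exp (v * L) / (exp ((u - of_real b) * L) * exp ((v - of_real b) * L))
        = exp (u * L + v * L - ((u - of_real b) * L + (v - of_real b) * L))"
      by (simp add: exp_add exp_diff)
    also have "u * L + v * L - ((u - of_real b) * L + (v - of_real b) * L) = of_real (2*b*ln (real N))"
      by (simp add: L_def algebra_simps)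
    finally show ?thesis by (simp flip: exp_of_real)
  qed
  have pu: "pochhammer u (Suc N) = (\<Prod>n<Suc N. u + of_nat n)" for u :: complex
    by (simp add: pochhammer_prod atLeast0LessThan)
  have pne: "(\<Prod>n<Suc N. (u + of_nat n) * (v + of_nat n)) \<noteq> 0"
    using nz by (simp add: prod_zero_iff)
  have "(\<Prod>n<Suc N. (complex_of_real (muv h b n) - z) / (complex_of_real (lamv h n) - z))
     = (\<Prod>n<Suc N. ((u - of_real b + of_nat n) * (v - of_real b + of_nat n)) / ((u + of_nat n) * (v + of_nat n)))"
    by (simp add: lam_fact[OF uv] mu_fact[OF uv])
  also have "\<dots> = (\<Prod>n<Suc N. u - of_real b + of_nat n) * (\<Prod>n<Suc N. v - of_real b + of_nat n)
       / ((\<Prod>n<Suc N. u + of_nat n) * (\<Prod>n<Suc N. v + of_nat n))"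
    by (simp add: prod_dividef prod.distrib)
  finally have pr: "(\<Prod>n<Suc N. (complex_of_real (muv h b n) - z) / (complex_of_real (lamv h n) - z))
     = (\<Prod>n<Suc N. u - of_real b + of_nat n) * (\<Prod>n<Suc N. v - of_real b + of_nat n)
       / ((\<Prod>n<Suc N. u + of_nat n) * (\<Prod>n<Suc N. v + of_nat n))" .
  have f0: "(fact N :: complex) \<noteq> 0" by simp
  have p1: "(\<Prod>n<Suc N. u + of_nat n) \<noteq> 0" "(\<Prod>n<Suc N. v + of_nat n) \<noteq> 0"
     "(\<Prod>n<Suc N. u - of_real b + of_nat n) \<noteq> 0" "(\<Prod>n<Suc N. v - of_real b + of_nat n) \<noteq> 0"
    using nz by (simp_all add: prod_zero_iff)
  define A where "A = (\<Prod>n<Suc N. u + of_nat n)"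
  define B where "B = (\<Prod>n<Suc N. v + of_nat n)"
  define C where "C = (\<Prod>n<Suc N. u - of_real b + of_nat n)"
  define D where "D = (\<Prod>n<Suc N. v - of_real b + of_nat n)"
  define F where "F = (fact N :: complex)"
  define E1 where "E1 = exp (u * L)"
  define E2 where "E2 = exp (v * L)"
  define E3 where "E3 = exp ((u - of_real b) * L)"
  define E4 where "E4 = exp ((v - of_real b) * L)"
  have ne: "A \<noteq> 0" "B \<noteq> 0" "C \<noteq> 0" "D \<noteq> 0" "F \<noteq> 0" "E3 \<noteq> 0" "E4 \<noteq> 0"
    using p1 f0 unfolding A_def B_def C_def D_def F_def E3_def E4_def by auto
  have "Gamma_series u N * Gamma_series v N / (Gamma_series (u - of_real b) N * Gamma_series (v - of_real b) N)
     = (F * E1 / A) * (F * E2 / B) / ((F * E3 / C) * (F * E4 / D))"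
    unfolding Gamma_series_def Suc_eq_plus1[symmetric] pu L_def[symmetric] A_def B_def C_def D_def F_def
      E1_def E2_def E3_def E4_def ..
  also have "\<dots> = (E1 * E2 / (E3 * E4)) * (C * D / (A * B))"
    using ne by (simp add: field_simps)
  finally show ?thesis
    unfolding pr A_def[symmetric] B_def[symmetric] C_def[symmetric] D_def[symmetric]
    using e unfolding E1_def E2_def E3_def E4_def by simp
qed

lemma arctan_diff_le:
  assumes "0 \<le> b" "b \<le> a"
  shows "arctan a - arctan b \<le> (a - b) / (1 + b^2)"
proof (cases "b = a")
  case True then show ?thesis by simp
next
  case False
  hence ab: "b < a" using assms by simp
  obtain x where x: "b < x" "x < a" "arctan a - arctan b = (a - b) * inverse (1 + x^2)"
    using MVT2[OF ab, of arctan "\<lambda>x. inverse (1 + x^2)"] DERIV_arctan by blast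
  have "inverse (1 + x^2) \<le> inverse (1 + b^2)"
    using x assms by (intro le_imp_inverse_le) (auto intro!: power_mono add_pos_nonneg)
  hence "(a - b) * inverse (1 + x^2) \<le> (a - b) * inverse (1 + b^2)"
    using ab by (intro mult_left_mono) auto
  thus ?thesis using x by (simp add: field_simps)
qed

lemma arctan_abs_diff_le:
  assumes "0 < m" "m \<le> a" "m \<le> b"
  shows "\<bar>arctan a - arctan b\<bar> \<le> \<bar>a - b\<bar> / m^2"
proof -
  have key: "arctan a' - arctan b' \<le> (a' - b') / m^2" if "m \<le> b'" "b' \<le> a'" for a' b'
  proof -
    have "arctan a' - arctan b' \<le> (a' - b') / (1 + b'^2)"
      using that assms by (intro arctan_diff_le) auto
    also have "\<dots> \<le> (a' - b') / m^2"
    proof (rule divide_left_mono)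
      have "m^2 \<le> b'^2" using that assms by (intro power_mono) auto
      thus "m^2 \<le> 1 + b'^2" by simp
      show "0 \<le> a' - b'" using that by simp
      show "0 < (1 + b'^2) * m^2" using assms by (intro mult_pos_pos add_pos_nonneg) auto
    qed
    finally show ?thesis .
  qed
  show ?thesis
  proof (cases "b \<le> a")
    case True
    then show ?thesis using key[of b a] assms arctan_monotone'[of b a] by (simp)
  next
    case False
    then show ?thesis using key[of a b] assms arctan_monotone'[of a b] by (simp add: abs_minus_commute)
  qed
qed

lemma phi_diff_le:
  assumes "Im z > 0" "0 < m" "m \<le> q1 - Re z" "m \<le> q2 - Re z"
  shows "\<bar>phi z q1 - phi z q2\<bar> \<le> \<bar>q1 - q2\<bar> * Im z / m^2"
proof -
  let ?y = "Im z"
  have "\<bar>phi z q1 - phi z q2\<bar> \<le> \<bar>(q1 - Re z)/?y - (q2 - Re z)/?y\<bar> / (m/?y)^2"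
    unfolding phi_def using assms
    by (intro arctan_abs_diff_le) (auto simp: divide_right_mono)
  also have "\<dots> = \<bar>q1 - q2\<bar> * ?y / m^2"
    using assms by (simp add: field_simps power2_eq_square abs_div)
  finally show ?thesis .
qed

lemma quad_eventually:
  assumes "real n \<ge> 2*\<bar>P\<bar> + 2*\<bar>Q\<bar> + 2"
  shows "(real n)^2/2 + P * real n + Q \<ge> 0"
proof -
  have n1: "real n \<ge> 1" using assms by simp
  have "real n/2 - \<bar>P\<bar> \<ge> \<bar>Q\<bar> + 1" using assms by simp
  hence "real n * (real n/2 - \<bar>P\<bar>) \<ge> 1 * (\<bar>Q\<bar> + 1)"
    using n1 by (intro mult_mono) auto
  moreover have "P * real n \<ge> - \<bar>P\<bar> * real n"
    by (rule mult_right_mono) auto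
  moreover have "Q \<ge> - \<bar>Q\<bar>" by simp
  ultimately show ?thesis by (simp add: power2_eq_square algebra_simps)
qed

lemma lam_mu_diff: "lamv h n - muv h b n = b * (2 * real n + 2*h - b)"
  by (simp add: lamv_def muv_def algebra_simps)

lemma uniform_bound:
  fixes h b X Y :: real
  assumes "Y > 0"
  shows "\<exists>M. summable M \<and> (\<forall>n z. \<bar>Re z\<bar> \<le> X \<longrightarrow> 0 < Im z \<longrightarrow> Im z \<le> Y \<longrightarrow>
            \<bar>phi z (muv h b n) - phi z (lamv h n)\<bar> \<le> M n)"
proof -
  define T where "T = 2*\<bar>2*h\<bar> + 2*\<bar>X\<bar> + 2 + 2*\<bar>2*h - 2*b\<bar> + 2*\<bar>b^2 - 2*h*b - X\<bar>"
  define C where "C = 4 * Y * \<bar>b\<bar> * (2 + \<bar>2*h - b\<bar>)"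
  define M where "M n = (if real n < T then pi else C * inverse (real n ^ 3))" for n
  have sM: "summable M"
  proof -
    have "eventually (\<lambda>n. M n = C * inverse (real n ^ 3)) sequentially"
      unfolding M_def eventually_sequentially
      by (rule exI[of _ "nat \<lceil>T\<rceil>"]) auto
    moreover have "summable (\<lambda>n. C * inverse (real n ^ 3))"
      by (intro summable_mult inverse_power_summable) simp
    ultimately show ?thesis using summable_cong[of M "\<lambda>n. C * inverse (real n ^ 3)"] by simp
  qed
  have bnd: "\<bar>phi z (muv h b n) - phi z (lamv h n)\<bar> \<le> M n"
    if z: "\<bar>Re z\<bar> \<le> X" "0 < Im z" "Im z \<le> Y" for n z
  proof (cases "real n < T")
    case True
    have "\<bar>phi z (muv h b n) - phi z (lamv h n)\<bar> \<le> pi"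
      unfolding phi_def
      using arctan_lbound[of "(muv h b n - Re z) / Im z"] arctan_ubound[of "(muv h b n - Re z) / Im z"]
        arctan_lbound[of "(lamv h n - Re z) / Im z"] arctan_ubound[of "(lamv h n - Re z) / Im z"]
      by linarith
    then show ?thesis using True by (simp add: M_def)
  next
    case False
    hence nT: "real n \<ge> T" by simp
    have "T \<ge> 2" unfolding T_def by (simp add: add_nonneg_nonneg)
    hence n1: "real n \<ge> 1" using nT by linarith
    define m where "m = (real n)^2/2"
    have m0: "m > 0" using n1 unfolding m_def by simp
    have Tge: "2*\<bar>2*h\<bar> + 2*\<bar>-X\<bar> + 2 \<le> T" "2*\<bar>2*h - 2*b\<bar> + 2*\<bar>b^2 - 2*h*b - X\<bar> + 2 \<le> T"
      unfolding T_def using abs_ge_zero[of "2*h - 2*b"] abs_ge_zero[of "b^2 - 2*h*b - X"]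
        abs_ge_zero[of "2*h"] abs_ge_zero[of X] by simp_all
    have l1: "(real n)^2/2 + 2*h * real n + (-X) \<ge> 0"
      by (rule quad_eventually) (use nT Tge in linarith)
    have l2: "(real n)^2/2 + (2*h - 2*b) * real n + (b^2 - 2*h*b - X) \<ge> 0"
      by (rule quad_eventually) (use nT Tge in linarith)
    have ml: "m \<le> lamv h n - Re z"
      using l1 z(1) unfolding m_def lamv_def by (simp add: power2_eq_square algebra_simps) 
    have mm: "m \<le> muv h b n - Re z"
      using l2 z(1) unfolding m_def muv_def by (simp add: power2_eq_square algebra_simps)
    have s1: "\<bar>phi z (muv h b n) - phi z (lamv h n)\<bar> \<le> \<bar>muv h b n - lamv h n\<bar> * Im z / m^2"
      by (rule phi_diff_le) (use z m0 ml mm in auto)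
    have s2: "\<bar>muv h b n - lamv h n\<bar> = \<bar>b\<bar> * \<bar>2 * real n + 2*h - b\<bar>"
      using lam_mu_diff[of h n b] by (simp add: abs_minus_commute abs_mult)
    have s3: "\<bar>2 * real n + 2*h - b\<bar> \<le> (2 + \<bar>2*h - b\<bar>) * real n"
    proof -
      have "\<bar>2 * real n + 2*h - b\<bar> \<le> 2 * real n + \<bar>2*h - b\<bar>" by simp
      moreover have "\<bar>2*h - b\<bar> * 1 \<le> \<bar>2*h - b\<bar> * real n" using n1 by (intro mult_left_mono) auto
      ultimately show ?thesis by (simp add: algebra_simps)
    qed
    have "\<bar>muv h b n - lamv h n\<bar> * Im z \<le> (\<bar>b\<bar> * ((2 + \<bar>2*h - b\<bar>) * real n)) * Y"
      unfolding s2 using z s3 by (intro mult_mono mult_left_mono) auto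
    hence "\<bar>phi z (muv h b n) - phi z (lamv h n)\<bar> \<le> (\<bar>b\<bar> * ((2 + \<bar>2*h - b\<bar>) * real n)) * Y / m^2"
      using s1 m0 by (meson divide_right_mono order_trans zero_le_power2)
    also have "\<dots> = C * inverse (real n ^ 3)"
      using n1 unfolding C_def m_def by (simp add: field_simps power2_eq_square power3_eq_cube)
    finally show ?thesis using False by (simp add: M_def)
  qed
  show ?thesis using sM bnd by blast
qed

definition Theta :: "real \<Rightarrow> real \<Rightarrow> complex \<Rightarrow> real" where
  "Theta h b z = (\<Sum>n. phi z (muv h b n) - phi z (lamv h n))"

definition Kc :: "real \<Rightarrow> real \<Rightarrow> real" where
  "Kc \<alpha> \<beta> = - Gamma (1 - \<beta>) / (2 powr (1 + \<alpha> + \<beta>) * \<beta> * Gamma (1 + \<beta>))"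

definition Gr :: "real \<Rightarrow> real \<Rightarrow> complex \<Rightarrow> complex" where
  "Gr \<alpha> \<beta> z = (Gamma ((complex_of_real (1 + \<alpha> + \<beta>) + sigma_ab \<alpha> \<beta> z) / 2)
        * Gamma ((complex_of_real (1 + \<alpha> + \<beta>) - sigma_ab \<alpha> \<beta> z) / 2))
     / (Gamma ((complex_of_real (1 + \<alpha> - \<beta>) + sigma_ab \<alpha> \<beta> z) / 2)
        * Gamma ((complex_of_real (1 + \<alpha> - \<beta>) - sigma_ab \<alpha> \<beta> z) / 2))"

lemma m_hat_eq: "m_hat \<alpha> \<beta> z = complex_of_real (Kc \<alpha> \<beta>) * Gr \<alpha> \<beta> z"
  unfolding m_hat_def Gr_def Kc_def Gamma_complex_of_real by simp

lemma Im_csqrt_pos: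
  assumes "Im w > 0" shows "Im (csqrt w) > 0"
proof -
  have "Im w = Im ((csqrt w)^2)" by simp
  also have "\<dots> = 2 * Re (csqrt w) * Im (csqrt w)" by (simp add: power2_eq_square)
  finally have "2 * Re (csqrt w) * Im (csqrt w) > 0" using assms by simp
  moreover have "Re (csqrt w) \<ge> 0" by (rule Re_csqrt)
  ultimately show ?thesis by (smt (verit) mult_nonneg_nonpos)
qed

lemma Im_sigma_pos:
  assumes "Im z > 0" shows "Im (sigma_ab \<alpha> \<beta> z) > 0"
  unfolding sigma_ab_def by (rule Im_csqrt_pos) (use assms in \<open>simp add: power2_eq_square\<close>)

lemma cis_sum: "(\<Prod>n\<in>A. cis (t n)) = cis (\<Sum>n\<in>A. t n)"
  by (induction A rule: infinite_finite_induct) (auto simp: cis_mult)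

lemma summable_Theta:
  assumes "Im z > 0"
  shows "summable (\<lambda>n. phi z (muv h b n) - phi z (lamv h n))"
proof -
  obtain M where M: "summable M" "\<And>n. \<bar>phi z (muv h b n) - phi z (lamv h n)\<bar> \<le> M n"
    using uniform_bound[of "Im z" "\<bar>Re z\<bar>" h b] assms by auto
  show ?thesis by (rule summable_comparison_test[of _ M]) (use M in auto)
qed

lemma Gr_rep:
  fixes \<alpha> \<beta> :: real and z :: complex
  assumes z: "Im z > 0"
  defines "h \<equiv> (1 + \<alpha> + \<beta>) / 2"
  shows "\<exists>\<rho>>0. Gr \<alpha> \<beta> z = complex_of_real \<rho> * cis (Theta h \<beta> z)"
proof -
  define \<sigma> where "\<sigma> = sigma_ab \<alpha> \<beta> z"
  define c where "c = complex_of_real (1 + \<alpha> + \<beta>)"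
  define u where "u = (c + \<sigma>) / 2"
  define v where "v = (c - \<sigma>) / 2"
  have Is: "Im \<sigma> > 0" unfolding \<sigma>_def by (rule Im_sigma_pos[OF z])
  have Iu: "Im u > 0" and Iv: "Im v < 0" using Is unfolding u_def v_def c_def by simp_all
  have uv1: "u + v = complex_of_real (2*h)" unfolding u_def v_def c_def h_def by (simp add: field_simps)
  have uv2: "u * v = - z"
  proof -
    have "u * v = (c^2 - \<sigma>^2) / 4" unfolding u_def v_def by (simp add: field_simps power2_eq_square)
    also have "\<sigma>^2 = c^2 + 4 * z" unfolding \<sigma>_def sigma_ab_def c_def by simp
    finally show ?thesis by simp
  qed
  have nz: "\<And>n. u + of_nat n \<noteq> 0" "\<And>n. v + of_nat n \<noteq> 0"
     "\<And>n. u - of_real \<beta> + of_nat n \<noteq> 0" "\<And>n. v - of_real \<beta> + of_nat n \<noteq> 0"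
    using Iu Iv by (auto simp: complex_eq_iff)
  have nint: "u \<notin> \<int>\<^sub>\<le>\<^sub>0" "v \<notin> \<int>\<^sub>\<le>\<^sub>0" "u - of_real \<beta> \<notin> \<int>\<^sub>\<le>\<^sub>0" "v - of_real \<beta> \<notin> \<int>\<^sub>\<le>\<^sub>0"
    using Iu Iv by (auto elim!: nonpos_Ints_cases dest!: arg_cong[of _ _ Im])
  have Gr_uv: "Gr \<alpha> \<beta> z = Gamma u * Gamma v / (Gamma (u - of_real \<beta>) * Gamma (v - of_real \<beta>))"
  proof -
    have e1: "(complex_of_real (1 + \<alpha> - \<beta>) + \<sigma>) / 2 = u - of_real \<beta>"
      and e2: "(complex_of_real (1 + \<alpha> - \<beta>) - \<sigma>) / 2 = v - of_real \<beta>"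
      unfolding u_def v_def c_def by (simp_all add: field_simps)
    show ?thesis unfolding Gr_def \<sigma>_def[symmetric] c_def[symmetric] u_def[symmetric] v_def[symmetric] e1 e2 ..
  qed
  define G where "G = Gr \<alpha> \<beta> z"
  have G0: "G \<noteq> 0" unfolding G_def Gr_uv using nint by (simp add: Gamma_nonzero)
  define f where "f n = phi z (muv h \<beta> n) - phi z (lamv h n)" for n
  define TN where "TN N = (\<Sum>n<Suc N. f n)" for N
  define RN where "RN N = exp (2*\<beta>*ln (real N)) *
      (\<Prod>n<Suc N. cmod (complex_of_real (muv h \<beta> n) - z) / cmod (complex_of_real (lamv h n) - z))" for N
  have RN0: "RN N \<ge> 0" for N unfolding RN_def by (intro mult_nonneg_nonneg prod_nonneg) auto
  have lim1: "(\<lambda>N. Gamma_series u N * Gamma_series v N /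
       (Gamma_series (u - of_real \<beta>) N * Gamma_series (v - of_real \<beta>) N)) \<longlonglongrightarrow> G"
    unfolding G_def Gr_uv using nint
    by (intro tendsto_intros) (auto simp: Gamma_nonzero)
  have eqN: "Gamma_series u N * Gamma_series v N /
       (Gamma_series (u - of_real \<beta>) N * Gamma_series (v - of_real \<beta>) N)
      = complex_of_real (RN N) * cis (TN N)" for N
  proof -
    have "Gamma_series u N * Gamma_series v N /
       (Gamma_series (u - of_real \<beta>) N * Gamma_series (v - of_real \<beta>) N)
      = complex_of_real (exp (2*\<beta>*ln (real N))) *
      (\<Prod>n<Suc N. (complex_of_real (muv h \<beta> n) - z) / (complex_of_real (lamv h n) - z))"
      by (rule gamma_series_ratio[OF uv1 uv2 nz])
    also have "(\<Prod>n<Suc N. (complex_of_real (muv h \<beta> n) - z) / (complex_of_real (lamv h n) - z))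
       = (\<Prod>n<Suc N. complex_of_real (cmod (complex_of_real (muv h \<beta> n) - z) / cmod (complex_of_real (lamv h n) - z))
            * cis (f n))"
      unfolding f_def by (intro prod.cong refl ratio_cis[OF z])
    also have "\<dots> = complex_of_real (\<Prod>n<Suc N. cmod (complex_of_real (muv h \<beta> n) - z) / cmod (complex_of_real (lamv h n) - z))
        * cis (TN N)"
      unfolding prod.distrib cis_sum TN_def by simp
    finally show ?thesis unfolding RN_def by simp
  qed
  have lim2: "(\<lambda>N. complex_of_real (RN N) * cis (TN N)) \<longlonglongrightarrow> G"
    using lim1 unfolding eqN .
  have sf: "summable f" unfolding f_def by (rule summable_Theta[OF z])
  have limT: "TN \<longlonglongrightarrow> Theta h \<beta> z"
  proof -
    have "(\<lambda>N. \<Sum>n<N. f n) \<longlonglongrightarrow> suminf f" by (rule summable_LIMSEQ[OF sf])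
    hence "(\<lambda>N. \<Sum>n<Suc N. f n) \<longlonglongrightarrow> suminf f" by (rule LIMSEQ_Suc)
    thus ?thesis unfolding TN_def Theta_def f_def .
  qed
  have lim3: "(\<lambda>N. complex_of_real (RN N) * cis (TN N) * cis (- TN N)) \<longlonglongrightarrow> G * cis (- Theta h \<beta> z)"
    by (intro tendsto_intros lim2 limT)
  have eq3: "complex_of_real (RN N) * cis (TN N) * cis (- TN N) = complex_of_real (RN N)" for N
    by (simp add: cis_mult)
  define L where "L = G * cis (- Theta h \<beta> z)"
  have lim4: "(\<lambda>N. complex_of_real (RN N)) \<longlonglongrightarrow> L" using lim3 unfolding eq3 L_def .
  have "(\<lambda>N. Im (complex_of_real (RN N))) \<longlonglongrightarrow> Im L" by (intro tendsto_intros lim4)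
  hence ImL: "Im L = 0" by (simp add: LIMSEQ_const_iff)
  have "(\<lambda>N. Re (complex_of_real (RN N))) \<longlonglongrightarrow> Re L" by (intro tendsto_intros lim4)
  hence ReL: "Re L \<ge> 0" using RN0 by (intro LIMSEQ_le_const[of _ "Re L" 0]) auto
  have Leq: "L = complex_of_real (Re L)" using ImL by (simp add: complex_eq_iff)
  have GL: "G = L * cis (Theta h \<beta> z)" unfolding L_def by (simp add: cis_mult)
  have "L \<noteq> 0" using G0 GL by auto
  hence "Re L > 0" using ReL Leq by (cases "Re L = 0") auto
  moreover have "G = complex_of_real (Re L) * cis (Theta h \<beta> z)" using GL Leq by simp
  ultimately show ?thesis unfolding G_def by blast
qed

abbreviation "FF \<equiv> at (0::real) within {0<..1}"

lemma FF_nontriv: "\<not> trivial_limit FF"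
  by (simp add: trivial_limit_within)

lemma FF_ev: "eventually (\<lambda>t. 0 < t \<and> t \<le> 1) FF"
  unfolding eventually_at_filter by (auto intro: always_eventually)

lemma inv_lim:
  assumes "c > 0"
  shows "filterlim (\<lambda>t::real. d + c * inverse t) at_top FF"
proof -
  have "filterlim (\<lambda>t::real. inverse t) at_top FF"
    by (rule filterlim_mono[OF filterlim_inverse_at_top_right order_refl at_le]) auto
  hence "filterlim (\<lambda>t::real. c * inverse t) at_top FF"
    using assms by (intro filterlim_tendsto_pos_mult_at_top[OF tendsto_const]) auto
  thus ?thesis by (intro filterlim_tendsto_add_at_top[OF tendsto_const])
qed

definition glim :: "real \<Rightarrow> real \<Rightarrow> real \<Rightarrow> real" where
  "glim p s q = (if q = p then arctan (-s) else if q > p then pi/2 else -(pi/2))"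

lemma phi_path_lim:
  "((\<lambda>t. phi (Complex (p + t * s) t) q) \<longlongrightarrow> glim p s q) FF"
proof -
  have ev: "eventually (\<lambda>t. phi (Complex (p + t * s) t) q = arctan ((q - p) * inverse t - s)) FF"
    using FF_ev by eventually_elim (auto simp: phi_def field_simps)
  show ?thesis
  proof (cases "q = p")
    case True
    have "eventually (\<lambda>t. phi (Complex (p + t * s) t) q = arctan (-s)) FF"
      using ev FF_ev by eventually_elim (use True in auto)
    thus ?thesis using True by (simp add: glim_def tendsto_cong)
  next
    case False
    show ?thesis
    proof (cases "q > p")
      case True
      have "filterlim (\<lambda>t::real. (-s) + (q - p) * inverse t) at_top FF"
        using True by (intro inv_lim) auto
      hence "((\<lambda>t. arctan ((-s) + (q - p) * inverse t)) \<longlongrightarrow> pi/2) FF"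
        by (rule filterlim_compose[OF tendsto_arctan_at_top])
      thus ?thesis using ev True False
        by (subst tendsto_cong[OF ev]) (simp add: glim_def algebra_simps)
    next
      case q: False
      have "filterlim (\<lambda>t::real. s + (p - q) * inverse t) at_top FF"
        using q False by (intro inv_lim) auto
      hence "((\<lambda>t. arctan (s + (p - q) * inverse t)) \<longlongrightarrow> pi/2) FF"
        by (rule filterlim_compose[OF tendsto_arctan_at_top])
      hence "((\<lambda>t. - arctan (s + (p - q) * inverse t)) \<longlongrightarrow> -(pi/2)) FF"
        by (intro tendsto_minus)
      moreover have "- arctan (s + (p - q) * inverse t) = arctan ((q - p) * inverse t - s)" for t
        by (simp flip: arctan_minus add: algebra_simps)
      ultimately show ?thesis using q False
        by (subst tendsto_cong[OF ev]) (simp add: glim_def)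
    qed
  qed
qed

lemma lam_big:
  assumes "real n \<ge> 2*\<bar>2*h\<bar> + 2*\<bar>p\<bar> + 2"
  shows "lamv h n > p"
proof -
  have "(real n)^2/2 + (2*h) * real n + (-p) \<ge> 0"
    by (rule quad_eventually) (use assms in simp)
  moreover have "real n \<ge> 1" using assms by (smt (verit) abs_ge_zero)
  hence "real n * real n > 0" by simp
  ultimately show ?thesis unfolding lamv_def by (simp add: power2_eq_square algebra_simps)
qed

lemma mu_big:
  assumes "real n \<ge> 2*\<bar>2*h - 2*b\<bar> + 2*\<bar>b^2 - 2*h*b - p\<bar> + 2"
  shows "muv h b n > p"
proof -
  have "(real n)^2/2 + (2*h - 2*b) * real n + (b^2 - 2*h*b - p) \<ge> 0"
    by (rule quad_eventually) (use assms in simp)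
  moreover have "real n \<ge> 1" using assms by (smt (verit) abs_ge_zero)
  hence "real n * real n > 0" by simp
  ultimately show ?thesis unfolding muv_def by (simp add: power2_eq_square algebra_simps)
qed

lemma big_bound: "\<exists>N. \<forall>n\<ge>N. lamv h n > p \<and> muv h b n > p"
proof -
  define T where "T = 2*\<bar>2*h\<bar> + 2*\<bar>p\<bar> + 2 + (2*\<bar>2*h - 2*b\<bar> + 2*\<bar>b^2 - 2*h*b - p\<bar> + 2)"
  show ?thesis
  proof (intro exI allI impI conjI)
    fix n assume "nat \<lceil>T\<rceil> \<le> n"
    hence nT: "real n \<ge> T" by linarith
    have a: "0 \<le> \<bar>2*h\<bar>" "0 \<le> \<bar>p\<bar>" "0 \<le> \<bar>2*h - 2*b\<bar>" "0 \<le> \<bar>b^2 - 2*h*b - p\<bar>" by simp_all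
    show "lamv h n > p" by (rule lam_big) (use nT a in \<open>unfold T_def; linarith\<close>)
    show "muv h b n > p" by (rule mu_big) (use nT a in \<open>unfold T_def; linarith\<close>)
  qed
qed

definition cum :: "real \<Rightarrow> real \<Rightarrow> real \<Rightarrow> int" where
  "cum h b p = int (card {n. muv h b n < p}) - int (card {n. lamv h n < p})"
definition net :: "real \<Rightarrow> real \<Rightarrow> real \<Rightarrow> int" where
  "net h b p = int (card {n. muv h b n = p}) - int (card {n. lamv h n = p})"

lemma sum_glim:
  assumes N: "\<forall>n\<ge>N. lamv h n > p \<and> muv h b n > p"
  shows "(\<Sum>n<N. glim p s (muv h b n) - glim p s (lamv h n)) =
     - pi * cum h b p + of_int (net h b p) * (arctan (-s) - pi/2)"
proof -
  have g: "glim p s q = pi/2 - pi * (if q < p then 1 else 0) - (pi/2 - arctan (-s)) * (if q = p then 1 else 0)" for q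
    by (simp add: glim_def)
  have cnt: "(\<Sum>n<N. (if P n then 1 else 0::real)) = real (card {n. P n})"
    if "\<And>n. P n \<Longrightarrow> n < N" for P
  proof -
    have e: "{..<N} \<inter> {n. P n} = {n. P n}" using that by auto
    show ?thesis by (simp add: sum.If_cases e)
  qed
  have c1: "(\<Sum>n<N. (if muv h b n < p then 1 else 0::real)) = real (card {n. muv h b n < p})"
    by (rule cnt) (metis N less_asym not_less)
  have c2: "(\<Sum>n<N. (if lamv h n < p then 1 else 0::real)) = real (card {n. lamv h n < p})"
    by (rule cnt) (metis N less_asym not_less)
  have c3: "(\<Sum>n<N. (if muv h b n = p then 1 else 0::real)) = real (card {n. muv h b n = p})"
    by (rule cnt) (metis N less_irrefl not_less)
  have c4: "(\<Sum>n<N. (if lamv h n = p then 1 else 0::real)) = real (card {n. lamv h n = p})"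
    by (rule cnt) (metis N less_irrefl not_less)
  have "(\<Sum>n<N. glim p s (muv h b n) - glim p s (lamv h n)) =
     (\<Sum>n<N. - pi * ((if muv h b n < p then 1 else 0) - (if lamv h n < p then 1 else 0))
       + (arctan (-s) - pi/2) * ((if muv h b n = p then 1 else 0) - (if lamv h n = p then 1 else 0)))"
    unfolding g by (intro sum.cong refl) (simp add: algebra_simps)
  also have "\<dots> = - pi * ((\<Sum>n<N. (if muv h b n < p then 1 else 0)) - (\<Sum>n<N. (if lamv h n < p then 1 else 0)))
       + (arctan (-s) - pi/2) * ((\<Sum>n<N. (if muv h b n = p then 1 else 0)) - (\<Sum>n<N. (if lamv h n = p then 1 else 0)))"
    by (simp add: sum.distrib sum_subtractf sum_distrib_left right_diff_distrib sum_negf)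
  also have "\<dots> = - pi * cum h b p + of_int (net h b p) * (arctan (-s) - pi/2)"
    unfolding c1 c2 c3 c4 cum_def net_def by simp
  finally show ?thesis .
qed

lemma Theta_path_lim:
  "((\<lambda>t. Theta h b (Complex (p + t * s) t)) \<longlongrightarrow>
      - pi * cum h b p + of_int (net h b p) * (arctan (-s) - pi/2)) FF"
proof -
  define F where "F i t = phi (Complex (p + t * s) t) (muv h b i) - phi (Complex (p + t * s) t) (lamv h i)" for i t
  define l where "l i = glim p s (muv h b i) - glim p s (lamv h i)" for i
  obtain N where N: "\<forall>n\<ge>N. lamv h n > p \<and> muv h b n > p" using big_bound by blast
  have lsum: "l sums (\<Sum>n<N. l n)"
  proof (rule sums_finite)
    show "finite {..<N}" by simp
    fix n assume "n \<notin> {..<N}"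
    hence "muv h b n > p" "lamv h n > p" using N by auto
    thus "l n = 0" unfolding l_def glim_def by auto
  qed
  have lim_g: "(\<lambda>n. \<Sum>i<n. l i) \<longlonglongrightarrow> (\<Sum>n<N. l n)"
    using lsum unfolding sums_def .
  obtain M where M: "summable M" "\<And>n z. \<bar>Re z\<bar> \<le> \<bar>p\<bar> + \<bar>s\<bar> \<Longrightarrow> 0 < Im z \<Longrightarrow> Im z \<le> 1 \<Longrightarrow>
            \<bar>phi z (muv h b n) - phi z (lamv h n)\<bar> \<le> M n"
    using uniform_bound[of 1 "\<bar>p\<bar> + \<bar>s\<bar>" h b] by auto
  have unif: "uniform_limit {0<..1} (\<lambda>n t. \<Sum>i<n. F i t) (\<lambda>t. suminf (\<lambda>i. F i t)) sequentially"
  proof (rule Weierstrass_m_test[OF _ M(1)])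
    fix n t assume t: "t \<in> {0<..(1::real)}"
    have "\<bar>p + t * s\<bar> \<le> \<bar>p\<bar> + \<bar>s\<bar>"
    proof -
      have "\<bar>t * s\<bar> \<le> \<bar>s\<bar>" using t by (simp add: abs_mult mult_left_le_one_le)
      thus ?thesis by (smt (verit) abs_triangle_ineq)
    qed
    thus "norm (F n t) \<le> M n" unfolding F_def using t M(2)[of "Complex (p + t * s) t" n] by auto
  qed
  have lims: "\<forall>\<^sub>F n in sequentially. ((\<lambda>t. \<Sum>i<n. F i t) \<longlongrightarrow> (\<Sum>i<n. l i)) FF"
    unfolding F_def l_def by (intro always_eventually allI tendsto_sum tendsto_diff phi_path_lim)
  have "((\<lambda>t. suminf (\<lambda>i. F i t)) \<longlongrightarrow> (\<Sum>n<N. l n)) FF"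
    by (rule swap_uniform_limit[OF lims lim_g unif]) simp
  moreover have "(\<Sum>n<N. l n) = - pi * cum h b p + of_int (net h b p) * (arctan (-s) - pi/2)"
    unfolding l_def by (rule sum_glim[OF N])
  ultimately show ?thesis unfolding F_def Theta_def by simp
qed

lemma herg_sign:
  fixes \<alpha> \<beta> :: real
  assumes H: "nevanlinna_herglotz (m_hat \<alpha> \<beta>)"
  defines "h \<equiv> (1 + \<alpha> + \<beta>) / 2"
  shows "Kc \<alpha> \<beta> * sin (- pi * cum h \<beta> p + of_int (net h \<beta> p) * (arctan (-s) - pi/2)) \<ge> 0"
proof -
  define K where "K = Kc \<alpha> \<beta>"
  have pos: "K * sin (Theta h \<beta> z) > 0" if z: "Im z > 0" for z
  proof -
    obtain \<rho> where r: "\<rho> > 0" "Gr \<alpha> \<beta> z = complex_of_real \<rho> * cis (Theta h \<beta> z)"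
      using Gr_rep[OF z, of \<alpha> \<beta>] unfolding h_def by blast
    have "Im (m_hat \<alpha> \<beta> z) > 0" using H z unfolding nevanlinna_herglotz_def by blast
    also have "Im (m_hat \<alpha> \<beta> z) = \<rho> * (K * sin (Theta h \<beta> z))"
      unfolding m_hat_eq r(2) K_def by (simp add: algebra_simps)
    finally show ?thesis using r(1) by (simp add: zero_less_mult_iff)
  qed
  have lim: "((\<lambda>t. K * sin (Theta h \<beta> (Complex (p + t * s) t))) \<longlongrightarrow>
      K * sin (- pi * cum h \<beta> p + of_int (net h \<beta> p) * (arctan (-s) - pi/2))) FF"
    by (intro tendsto_intros Theta_path_lim)
  have ev: "eventually (\<lambda>t. 0 \<le> K * sin (Theta h \<beta> (Complex (p + t * s) t))) FF"
    using FF_ev by eventually_elim (auto intro!: less_imp_le pos)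
  show ?thesis unfolding K_def[symmetric]
    by (rule tendsto_lowerbound[OF lim ev FF_nontriv])
qed

definition Aset :: "real \<Rightarrow> int set" where
  "Aset K = (if K < 0 then {0,1} else {-1,0})"

lemma sin_shift_int: "sin (- pi * of_int c + x) = (if even c then 1 else -1) * sin x"
proof -
  have "sin (- pi * of_int c + x) = sin (- (pi * of_int c) + x)" by simp
  also have "\<dots> = sin (- (pi * of_int c)) * cos x + cos (- (pi * of_int c)) * sin x"
    by (rule sin_add)
  also have "\<dots> = (if even c then 1 else -1) * sin x"
    by (simp only: sin_minus cos_minus sin_npi_int cos_npi_int)
  finally show ?thesis .
qed

lemma step_allowed:
  fixes c n :: int and K :: real
  assumes K: "K \<noteq> 0" and c: "c \<in> Aset K"
  and H: "\<And>\<psi>. - (pi/2) < \<psi> \<Longrightarrow> \<psi> < pi/2 \<Longrightarrow> 0 \<le> K * sin (- pi * of_int c + of_int n * (\<psi> - pi/2))"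
  shows "c + n \<in> Aset K"
proof -
  define e :: real where "e = (if even c then 1 else -1)"
  have H': "0 \<le> K * e * sin (of_int n * (\<psi> - pi/2))" if "- (pi/2) < \<psi>" "\<psi> < pi/2" for \<psi>
    using H[OF that] unfolding sin_shift_int e_def by (simp add: mult.assoc)
  have e1: "e = 1 \<or> e = -1" unfolding e_def by auto
  consider "n = 0" | "n = 1" | "n = -1" | "\<bar>n\<bar> \<ge> 2" by linarith
  then show ?thesis
  proof cases
    case 1 then show ?thesis using c by simp
  next
    case 2
    have "0 \<le> K * e * sin (of_int n * (0 - pi/2))" by (rule H') auto
    hence "K * e \<le> 0" using 2 by simp
    then show ?thesis using c K 2 unfolding Aset_def e_def by (auto split: if_splits)
  next
    case 3
    have "0 \<le> K * e * sin (of_int n * (0 - pi/2))" by (rule H') auto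
    hence "K * e \<ge> 0" using 3 by simp
    then show ?thesis using c K 3 unfolding Aset_def e_def by (auto split: if_splits)
  next
    case 4
    define m where "m = real_of_int \<bar>n\<bar>"
    have m2: "m \<ge> 2" unfolding m_def using 4 by linarith
    define sg :: real where "sg = (if n > 0 then 1 else -1)"
    have nm: "real_of_int n = sg * m" unfolding sg_def m_def by auto
    have p1: "0 \<le> K * e * sin (of_int n * ((pi/2 - pi/(2*m)) - pi/2))"
    proof (rule H')
      show "pi / 2 - pi / (2 * m) < pi / 2" using m2 by simp
      have "pi / (2*m) \<le> pi / 4" using m2 by (intro divide_left_mono) auto
      thus "- (pi / 2) < pi / 2 - pi / (2 * m)" using pi_gt_zero by linarith
    qed
    have p2: "0 \<le> K * e * sin (of_int n * ((pi/2 - 3*pi/(2*m)) - pi/2))"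
    proof (rule H')
      show "pi / 2 - 3*pi / (2 * m) < pi / 2" using m2 by simp
      have "3*pi / (2*m) \<le> 3*pi / 4" using m2 by (intro divide_left_mono) auto
      thus "- (pi / 2) < pi / 2 - 3*pi / (2 * m)" using pi_gt_zero by linarith
    qed
    have a1: "of_int n * ((pi/2 - pi/(2*m)) - pi/2) = - (sg * (pi/2))"
      unfolding nm using m2 by (simp add: field_simps)
    have a2: "of_int n * ((pi/2 - 3*pi/(2*m)) - pi/2) = - (sg * (pi/2)) - sg * pi"
      unfolding nm using m2 by (simp add: field_simps)
    have s1: "sin (- (sg * (pi/2))) = - sg" unfolding sg_def by simp
    have s2: "sin (- (sg * (pi/2)) - sg * pi) = sg"
    proof -
      have "sin (- (sg * (pi/2)) - sg * pi) = sin (- (sg * (pi/2))) * cos (sg * pi) - cos (- (sg * (pi/2))) * sin (sg * pi)"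
        by (rule sin_diff)
      also have "\<dots> = sg" unfolding sg_def by simp
      finally show ?thesis .
    qed
    have "0 \<le> K * e * (- sg)" using p1 unfolding a1 s1 .
    moreover have "0 \<le> K * e * sg" using p2 unfolding a2 s2 .
    ultimately have "K * e * sg = 0" by linarith
    moreover have "sg \<noteq> 0" "e \<noteq> 0" using e1 unfolding sg_def by auto
    ultimately show ?thesis using K by simp
  qed
qed

lemma finite_sets:
  "finite {n. lamv h n < p}" "finite {n. muv h b n < p}" "finite {n. lamv h n = p}" "finite {n. muv h b n = p}"
proof -
  obtain N where N: "\<forall>n\<ge>N. lamv h n > p \<and> muv h b n > p" using big_bound by blast
  have "{n. lamv h n < p} \<subseteq> {..<N}" "{n. muv h b n < p} \<subseteq> {..<N}"
     "{n. lamv h n = p} \<subseteq> {..<N}" "{n. muv h b n = p} \<subseteq> {..<N}"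
    using N by (auto simp: not_less[symmetric])
  thus "finite {n. lamv h n < p}" "finite {n. muv h b n < p}" "finite {n. lamv h n = p}" "finite {n. muv h b n = p}"
    by (auto intro: finite_subset)
qed

lemma cum_allowed:
  assumes K: "K \<noteq> 0"
  and H: "\<And>p s. K * sin (- pi * cum h b p + of_int (net h b p) * (arctan (-s) - pi/2)) \<ge> 0"
  shows "cum h b p \<in> Aset K"
proof -
  define S where "S p = lamv h ` {n. lamv h n < p} \<union> muv h b ` {n. muv h b n < p}" for p
  have finS: "finite (S p)" for p unfolding S_def using finite_sets by auto
  show ?thesis
  proof (induction "card (S p)" arbitrary: p rule: less_induct)
    case less
    show ?case
    proof (cases "S p = {}")
      case True
      hence "{n. lamv h n < p} = {}" "{n. muv h b n < p} = {}" unfolding S_def by auto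
      hence "cum h b p = 0" unfolding cum_def by simp
      thus ?thesis unfolding Aset_def by simp
    next
      case False
      define q where "q = Max (S p)"
      have qS: "q \<in> S p" unfolding q_def using False finS by (intro Max_in) auto
      have qp: "q < p" using qS unfolding S_def by auto
      have le: "x \<le> q" if "x \<in> S p" for x unfolding q_def using that finS by (intro Max_ge) auto
      have L: "{n. lamv h n < p} = {n. lamv h n < q} \<union> {n. lamv h n = q}"
      proof -
        have "lamv h n < p \<longleftrightarrow> lamv h n < q \<or> lamv h n = q" for n
          using le[of "lamv h n"] qp unfolding S_def by auto
        thus ?thesis by auto
      qed
      have M: "{n. muv h b n < p} = {n. muv h b n < q} \<union> {n. muv h b n = q}"
      proof -
        have "muv h b n < p \<longleftrightarrow> muv h b n < q \<or> muv h b n = q" for n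
          using le[of "muv h b n"] qp unfolding S_def by auto
        thus ?thesis by auto
      qed
      have cL: "card {n. lamv h n < p} = card {n. lamv h n < q} + card {n. lamv h n = q}"
        unfolding L by (rule card_Un_disjoint) (auto simp: finite_sets)
      have cM: "card {n. muv h b n < p} = card {n. muv h b n < q} + card {n. muv h b n = q}"
        unfolding M by (rule card_Un_disjoint) (auto simp: finite_sets)
      have cpq: "cum h b p = cum h b q + net h b q"
        unfolding cum_def net_def cL cM by simp
      have sub: "S q \<subset> S p"
      proof
        show "S q \<subseteq> S p" unfolding S_def using qp by auto
        have "q \<notin> S q" unfolding S_def by auto
        thus "S q \<noteq> S p" using qS by auto
      qed
      have "card (S q) < card (S p)" by (rule psubset_card_mono[OF finS sub])
      hence IH: "cum h b q \<in> Aset K" by (rule less.hyps)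
      have "cum h b q + net h b q \<in> Aset K"
      proof (rule step_allowed[OF K IH])
        fix \<psi> :: real assume a: "- (pi/2) < \<psi>" "\<psi> < pi/2"
        have "arctan (- (- tan \<psi>)) = \<psi>" using a by (simp add: arctan_tan)
        thus "0 \<le> K * sin (- pi * of_int (cum h b q) + of_int (net h b q) * (\<psi> - pi/2))"
          using H[of q "- tan \<psi>"] by simp
      qed
      thus ?thesis using cpq by simp
    qed
  qed
qed

definition cnt :: "real \<Rightarrow> real \<Rightarrow> nat" where
  "cnt x r = card {n::nat. \<bar>real n + x\<bar> < r}"

lemma cum_cnt:
  assumes "r > 0"
  shows "cum h b (r^2 - h^2) = int (cnt (h - b) r) - int (cnt h r)"
proof -
  have l: "lamv h n < r^2 - h^2 \<longleftrightarrow> \<bar>real n + h\<bar> < r" for n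
  proof -
    have "lamv h n < r^2 - h^2 \<longleftrightarrow> (real n + h)^2 < r^2"
      unfolding lamv_def by (simp add: power2_eq_square algebra_simps)
    also have "\<dots> \<longleftrightarrow> \<bar>real n + h\<bar> < r" using assms abs_le_square_iff[of r "real n + h"]
      by auto
    finally show ?thesis .
  qed
  have m: "muv h b n < r^2 - h^2 \<longleftrightarrow> \<bar>real n + (h - b)\<bar> < r" for n
  proof -
    have "muv h b n < r^2 - h^2 \<longleftrightarrow> (real n + (h - b))^2 < r^2"
      unfolding muv_def by (simp add: power2_eq_square algebra_simps)
    also have "\<dots> \<longleftrightarrow> \<bar>real n + (h - b)\<bar> < r" using assms abs_le_square_iff[of r "real n + (h - b)"]
      by auto
    finally show ?thesis .
  qed
  show ?thesis unfolding cum_def cnt_def l m ..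
qed

lemma cnt_large:
  assumes "r > \<bar>x\<bar>"
  shows "int (cnt x r) = \<lceil>r - x\<rceil>"
proof -
  have "{n::nat. \<bar>real n + x\<bar> < r} = {..< nat \<lceil>r - x\<rceil>}"
  proof (intro set_eqI iffI)
    fix n assume "n \<in> {n::nat. \<bar>real n + x\<bar> < r}"
    hence "real n < r - x" by auto
    hence "int n < \<lceil>r - x\<rceil>" by (simp add: less_ceiling_iff)
    thus "n \<in> {..< nat \<lceil>r - x\<rceil>}" by simp
  next
    fix n assume "n \<in> {..< nat \<lceil>r - x\<rceil>}"
    hence "int n < \<lceil>r - x\<rceil>" by simp
    hence "real n < r - x" by (simp add: less_ceiling_iff)
    thus "n \<in> {n::nat. \<bar>real n + x\<bar> < r}" using assms by auto
  qed
  moreover have "\<lceil>r - x\<rceil> \<ge> 0" using assms by simp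
  ultimately show ?thesis unfolding cnt_def by simp
qed

lemma cnt_small_neg:
  assumes "x < 0" "0 < r" "r \<le> 1"
  shows "int (cnt x r) = (if frac x < r then 1 else 0) + (if 1 - frac x < r then 1 else 0)"
proof -
  define m where "m = - \<lfloor>x\<rfloor>"
  define f where "f = frac x"
  have m1: "m \<ge> 1" unfolding m_def using assms by linarith
  have xf: "x = f - of_int m" unfolding f_def m_def frac_def by simp
  have f01: "0 \<le> f" "f < 1" unfolding f_def by (simp_all add: frac_lt_1)
  have iff: "\<bar>real n + x\<bar> < r \<longleftrightarrow> (int n = m - 1 \<and> 1 - f < r) \<or> (int n = m \<and> f < r)" for n
  proof
    assume a: "\<bar>real n + x\<bar> < r"
    hence b: "-1 < real n + x" "real n + x < 1" using assms by auto
    have "int n - m \<ge> -1"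
    proof -
      have "real_of_int (int n - m) > -1 - f" using b xf by simp
      hence "real_of_int (int n - m) > -2" using f01 by linarith
      thus ?thesis by linarith
    qed
    moreover have "int n - m \<le> 0"
    proof -
      have "real_of_int (int n - m) < 1 - f" using b xf by simp
      hence "real_of_int (int n - m) < 1" using f01 by linarith
      thus ?thesis by linarith
    qed
    ultimately have "int n = m - 1 \<or> int n = m" by linarith
    thus "(int n = m - 1 \<and> 1 - f < r) \<or> (int n = m \<and> f < r)"
    proof
      assume e: "int n = m - 1"
      hence "real n = real_of_int m - 1" by (metis of_int_diff of_int_of_nat_eq of_int_1)
      hence "real n + x = f - 1" using xf by simp
      thus ?thesis using a e f01 by auto
    next
      assume e: "int n = m"
      hence "real n = real_of_int m" by (metis of_int_of_nat_eq)
      hence "real n + x = f" using xf by simp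
      thus ?thesis using a e f01 by auto
    qed
  next
    assume "(int n = m - 1 \<and> 1 - f < r) \<or> (int n = m \<and> f < r)"
    thus "\<bar>real n + x\<bar> < r"
    proof
      assume e: "int n = m - 1 \<and> 1 - f < r"
      hence "real n = real_of_int m - 1" by (metis of_int_diff of_int_of_nat_eq of_int_1)
      hence "real n + x = f - 1" using xf by simp
      thus ?thesis using e f01 by auto
    next
      assume e: "int n = m \<and> f < r"
      hence "real n = real_of_int m" by (metis of_int_of_nat_eq)
      hence "real n + x = f" using xf by simp
      thus ?thesis using e f01 by auto
    qed
  qed
  define A where "A = (if 1 - f < r then {nat (m - 1)} else {})"
  define B where "B = (if f < r then {nat m} else {})"
  have "{n::nat. \<bar>real n + x\<bar> < r} = A \<union> B"
    unfolding A_def B_def iff using m1 by auto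
  moreover have "A \<inter> B = {}" unfolding A_def B_def using m1 by auto
  ultimately have "cnt x r = card A + card B" unfolding cnt_def
    by (simp add: card_Un_disjoint A_def B_def)
  thus ?thesis unfolding A_def B_def f_def by auto
qed

lemma cnt_small_pos:
  assumes "0 \<le> x" "x < 1" "0 < r" "r \<le> 1"
  shows "int (cnt x r) = (if x < r then 1 else 0)"
proof -
  have "{n::nat. \<bar>real n + x\<bar> < r} = (if x < r then {0} else {})"
  proof (intro set_eqI iffI)
    fix n assume "n \<in> {n::nat. \<bar>real n + x\<bar> < r}"
    hence a: "real n + x < r" using assms by auto
    hence "real n < 1" using assms by linarith
    hence "n = 0" by simp
    thus "n \<in> (if x < r then {0} else {})" using a by auto
  next
    fix n assume "n \<in> (if x < r then {0::nat} else {})"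
    thus "n \<in> {n::nat. \<bar>real n + x\<bar> < r}" using assms by (auto split: if_splits)
  qed
  thus ?thesis unfolding cnt_def by auto
qed

lemma beta_range:
  assumes K: "K \<noteq> 0" and b: "b \<notin> \<int>"
  and A: "\<And>p. cum h b p \<in> Aset K"
  shows "(K < 0 \<and> 0 < b \<and> b < 1) \<or> (K > 0 \<and> -1 < b \<and> b < 0)"
proof -
  define fl where "fl = \<lfloor>b\<rfloor>"
  define fb where "fb = frac b"
  have fb: "0 < fb" "fb < 1" unfolding fb_def using b by (auto simp: frac_lt_1 frac_ge_0 order.not_eq_order_implies_strict)
  have bfl: "b = of_int fl + fb" unfolding fb_def fl_def frac_def by simp
  define N :: nat where "N = nat \<lceil>2*\<bar>h\<bar> + 2*\<bar>h - b\<bar>\<rceil> + 1"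
  have NN: "real N > 2*\<bar>h\<bar> + 2*\<bar>h - b\<bar>" unfolding N_def by linarith
  have key: "cum h b ((h + real N + d)^2 - h^2) = \<lceil>real N + d + b\<rceil> - int N - 1" if d: "0 < d" "d < 1" for d
  proof -
    define r where "r = h + real N + d"
    have i1: "\<bar>h\<bar> - h \<le> 2*\<bar>h\<bar> + 2*\<bar>h - b\<bar>"
      by (simp add: abs_if)
    have i2: "\<bar>h - b\<bar> - h \<le> 2*\<bar>h\<bar> + 2*\<bar>h - b\<bar>"
      by (simp add: abs_if)
    have r1a: "r > \<bar>h\<bar>" using NN d i1 unfolding r_def by linarith
    have r1b: "r > \<bar>h - b\<bar>" using NN d i2 unfolding r_def by linarith
    note r1 = r1a r1b
    have r0: "r > 0" using r1 by linarith
    have "cum h b (r^2 - h^2) = int (cnt (h - b) r) - int (cnt h r)" by (rule cum_cnt[OF r0])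
    also have "int (cnt (h - b) r) = \<lceil>r - (h - b)\<rceil>" by (rule cnt_large[OF r1(2)])
    also have "int (cnt h r) = \<lceil>r - h\<rceil>" by (rule cnt_large[OF r1(1)])
    also have "\<lceil>r - h\<rceil> = int N + 1"
    proof -
      have "r - h = real_of_int (int N) + d" unfolding r_def by simp
      thus ?thesis using d by (simp add: ceiling_eq_iff)
    qed
    also have "r - (h - b) = real N + d + b" unfolding r_def by simp
    finally show ?thesis unfolding r_def by simp
  qed
  have k1: "cum h b ((h + real N + (1 - fb)/2)^2 - h^2) = fl"
  proof -
    have "\<lceil>real N + (1 - fb)/2 + b\<rceil> = int N + fl + 1"
    proof -
      have "real N + (1 - fb)/2 + b = real_of_int (int N + fl) + (1 + fb)/2"
        using bfl by (simp add: field_simps)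
      thus ?thesis using fb by (simp add: ceiling_eq_iff)
    qed
    thus ?thesis using key[of "(1 - fb)/2"] fb by simp
  qed
  have k2: "cum h b ((h + real N + (1 - fb/2))^2 - h^2) = fl + 1"
  proof -
    have "\<lceil>real N + (1 - fb/2) + b\<rceil> = int N + fl + 2"
    proof -
      have "real N + (1 - fb/2) + b = real_of_int (int N + fl + 1) + fb/2"
        using bfl by (simp add: field_simps)
      thus ?thesis using fb by (simp add: ceiling_eq_iff)
    qed
    thus ?thesis using key[of "1 - fb/2"] fb by simp
  qed
  have m1: "fl \<in> Aset K" using A k1 by metis
  have m2: "fl + 1 \<in> Aset K" using A k2 by metis
  show ?thesis
  proof (cases "K < 0")
    case True
    hence "fl = 0" using m1 m2 unfolding Aset_def by auto
    thus ?thesis using True fb bfl by simp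
  next
    case False
    hence Kp: "K > 0" using K by simp
    hence "fl = -1" using m1 m2 False unfolding Aset_def by auto
    thus ?thesis using Kp fb bfl by simp
  qed
qed

lemma small_r:
  assumes "x' < x" "x - x' < 1" "x + x' < 0" "x + x' \<notin> \<int>"
  shows "\<exists>r>0. int (cnt x' r) - int (cnt x r) \<notin> {0, 1}"
proof (cases "x \<ge> 0")
  case True
  have x'0: "x' < 0" "x' > -1" "x < 1" using assms True by linarith+
  have fx': "frac x' = x' + 1"
  proof -
    have "\<lfloor>x'\<rfloor> = -1" using x'0 by (simp add: floor_eq_iff)
    thus ?thesis unfolding frac_def by simp
  qed
  define e where "e = min (-(x + x')) (1 - (x - x')) / 2"
  have e0: "e > 0" "e < -(x + x')" "e < 1 - (x - x')" unfolding e_def using assms by auto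
  define r where "r = x + e"
  have r: "0 < r" "r \<le> 1" "x < r" "r < -x'" "r < x' + 1" unfolding r_def using e0 True x'0 by auto
  have "int (cnt x r) = 1" using cnt_small_pos[OF True x'0(3) r(1,2)] r by simp
  moreover have "int (cnt x' r) = 0" using cnt_small_neg[OF x'0(1) r(1,2)] r fx' by simp
  ultimately show ?thesis using r by (intro exI[of _ r]) auto
next
  case False
  hence x0: "x < 0" by simp
  have x'0: "x' < 0" using assms x0 by linarith
  define f where "f = frac x"
  define g where "g = frac x'"
  have f01: "0 \<le> f" "f < 1" "0 \<le> g" "g < 1" unfolding f_def g_def by (simp_all add: frac_lt_1)
  have fg: "f \<noteq> g"
  proof
    assume "f = g"
    hence e: "x - x' = of_int (\<lfloor>x\<rfloor> - \<lfloor>x'\<rfloor>)" unfolding f_def g_def frac_def by simp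
    have "0 < x - x'" "x - x' < 1" using assms by auto
    hence "0 < \<lfloor>x\<rfloor> - \<lfloor>x'\<rfloor>" "\<lfloor>x\<rfloor> - \<lfloor>x'\<rfloor> < 1" unfolding e by simp_all
    thus False by linarith
  qed
  have fg1: "f + g \<noteq> 1"
  proof
    assume "f + g = 1"
    hence "x + x' = of_int (\<lfloor>x\<rfloor> + \<lfloor>x'\<rfloor> + 1)" unfolding f_def g_def frac_def by simp
    thus False using assms(4) by (metis Ints_of_int)
  qed
  define a where "a = min f (1 - f)"
  define b where "b = min g (1 - g)"
  have ab: "a \<noteq> b" unfolding a_def b_def using fg fg1 by (auto simp: min_def split: if_splits)
  have cx: "\<And>r. 0 < r \<Longrightarrow> r \<le> 1 \<Longrightarrow> int (cnt x r) = (if f < r then 1 else 0) + (if 1 - f < r then 1 else 0)"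
    using cnt_small_neg[OF x0] unfolding f_def by blast
  have cx': "\<And>r. 0 < r \<Longrightarrow> r \<le> 1 \<Longrightarrow> int (cnt x' r) = (if g < r then 1 else 0) + (if 1 - g < r then 1 else 0)"
    using cnt_small_neg[OF x'0] unfolding g_def by blast
  show ?thesis
  proof (cases "a < b")
    case True
    define r where "r = (a + b) / 2"
    have a0: "0 \<le> a" "b \<le> 1/2" unfolding a_def b_def using f01 by (auto simp: min_def)
    have r: "0 < r" "r \<le> 1" "a < r" "r < b" unfolding r_def using True a0 by auto
    have "int (cnt x' r) = 0" using cx'[OF r(1,2)] r unfolding b_def by auto
    moreover have "int (cnt x r) \<ge> 1" using cx[OF r(1,2)] r unfolding a_def by (auto simp: min_def split: if_splits)
    ultimately show ?thesis using r by (intro exI[of _ r]) auto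
  next
    case False
    hence ba: "b < a" using ab by simp
    define r where "r = ((1 - a) + (1 - b)) / 2"
    have a0: "a \<le> 1/2" "0 \<le> b" unfolding a_def b_def using f01 by (auto simp: min_def)
    have r: "0 < r" "r \<le> 1" "1 - a < r" "r < 1 - b" "b < r" unfolding r_def using ba a0 by auto
    have "int (cnt x r) = 2" using cx[OF r(1,2)] r unfolding a_def by (auto simp: min_def split: if_splits)
    moreover have "int (cnt x' r) = 1" using cx'[OF r(1,2)] r unfolding b_def by (auto simp: min_def split: if_splits)
    ultimately show ?thesis using r by (intro exI[of _ r]) auto
  qed
qed

lemma Kc_nonzero:
  assumes "\<beta> \<notin> \<int>"
  shows "Kc \<alpha> \<beta> \<noteq> 0"
proof -
  have "1 - \<beta> \<notin> \<int>\<^sub>\<le>\<^sub>0" "1 + \<beta> \<notin> \<int>\<^sub>\<le>\<^sub>0"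
  proof -
    show "1 - \<beta> \<notin> \<int>\<^sub>\<le>\<^sub>0"
    proof
      assume "1 - \<beta> \<in> \<int>\<^sub>\<le>\<^sub>0"
      hence "1 - \<beta> \<in> \<int>" by (rule nonpos_Ints_Int)
      hence "1 - (1 - \<beta>) \<in> \<int>" by (intro Ints_diff) auto
      thus False using assms by simp
    qed
    show "1 + \<beta> \<notin> \<int>\<^sub>\<le>\<^sub>0"
    proof
      assume "1 + \<beta> \<in> \<int>\<^sub>\<le>\<^sub>0"
      hence "1 + \<beta> \<in> \<int>" by (rule nonpos_Ints_Int)
      hence "(1 + \<beta>) - 1 \<in> \<int>" by (intro Ints_diff) auto
      thus False using assms by simp
    qed
  qed
  hence "Gamma (1 - \<beta>) \<noteq> 0" "Gamma (1 + \<beta>) \<noteq> 0" by (simp_all add: Gamma_nonzero)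
  moreover have "\<beta> \<noteq> 0" using assms by auto
  ultimately show ?thesis unfolding Kc_def by simp
qed

lemma only_if_dir:
  fixes \<alpha> \<beta> :: real
  assumes b: "\<beta> \<notin> \<int>" and H: "nevanlinna_herglotz (m_hat \<alpha> \<beta>)"
  shows "((\<exists>n::nat. n \<ge> 1 \<and> \<alpha> = - real n) \<or> \<alpha> > -1) \<and> (\<beta> \<in> {-1<..<0} \<union> {0<..<1})"
proof -
  define K where "K = Kc \<alpha> \<beta>"
  define h where "h = (1 + \<alpha> + \<beta>) / 2"
  have K0: "K \<noteq> 0" unfolding K_def by (rule Kc_nonzero[OF b])
  have Hs: "\<And>p s. K * sin (- pi * cum h \<beta> p + of_int (net h \<beta> p) * (arctan (-s) - pi/2)) \<ge> 0"
    unfolding K_def h_def by (rule herg_sign[OF H])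
  have A: "\<And>p. cum h \<beta> p \<in> Aset K" by (rule cum_allowed[OF K0 Hs])
  have br: "(K < 0 \<and> 0 < \<beta> \<and> \<beta> < 1) \<or> (K > 0 \<and> -1 < \<beta> \<and> \<beta> < 0)"
    by (rule beta_range[OF K0 b A])
  have alpha: "(\<exists>n::nat. n \<ge> 1 \<and> \<alpha> = - real n) \<or> \<alpha> > -1"
  proof (rule ccontr)
    assume na: "\<not> ?thesis"
    hence a1: "\<alpha> \<le> -1" by auto
    have dZ: "1 + \<alpha> \<notin> \<int>"
    proof
      assume "1 + \<alpha> \<in> \<int>"
      hence "(1 + \<alpha>) - 1 \<in> \<int>" by (intro Ints_diff) auto
      then obtain j where j: "(1 + \<alpha>) - 1 = of_int j" by (auto elim: Ints_cases)
      define k where "k = j + 1"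
      have k: "1 + \<alpha> = of_int k" using j unfolding k_def by simp
      have "k \<le> 0" using k a1 by (smt (verit) of_int_le_0_iff)
      hence "\<alpha> = - real (nat (1 - k))" using k by simp
      moreover have "nat (1 - k) \<ge> 1" using \<open>k \<le> 0\<close> by simp
      ultimately show False using na by blast
    qed
    have d0: "1 + \<alpha> < 0"
    proof -
      have "\<alpha> \<noteq> -1" using na by (metis of_nat_1 order_refl)
      thus ?thesis using a1 by simp
    qed
    from br show False
    proof
      assume c: "K < 0 \<and> 0 < \<beta> \<and> \<beta> < 1"
      have e: "h + (h - \<beta>) = 1 + \<alpha>" unfolding h_def by (simp add: field_simps)
      have "h - \<beta> < h" "h - (h - \<beta>) < 1" "h + (h - \<beta>) < 0" "h + (h - \<beta>) \<notin> \<int>"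
        using c d0 dZ unfolding e by simp_all
      from small_r[OF this] obtain r where r: "r > 0" "int (cnt (h - \<beta>) r) - int (cnt h r) \<notin> {0, 1}"
        by blast
      have "cum h \<beta> (r^2 - h^2) \<in> Aset K" by (rule A)
      thus False using r c cum_cnt[OF r(1), of h \<beta>] unfolding Aset_def by simp
    next
      assume c: "K > 0 \<and> -1 < \<beta> \<and> \<beta> < 0"
      have e: "(h - \<beta>) + h = 1 + \<alpha>" unfolding h_def by (simp add: field_simps)
      have "h < h - \<beta>" "(h - \<beta>) - h < 1" "(h - \<beta>) + h < 0" "(h - \<beta>) + h \<notin> \<int>"
        using c d0 dZ unfolding e by simp_all
      from small_r[OF this] obtain r where r: "r > 0" "int (cnt h r) - int (cnt (h - \<beta>) r) \<notin> {0, 1}"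
        by blast
      have "cum h \<beta> (r^2 - h^2) \<in> Aset K" by (rule A)
      thus False using r c cum_cnt[OF r(1), of h \<beta>] unfolding Aset_def by auto
    qed
  qed
  show ?thesis using alpha br by auto
qed

lemma nonposInt_Im: "Im w \<noteq> 0 \<Longrightarrow> w \<notin> \<int>\<^sub>\<le>\<^sub>0"
  by (auto elim!: nonpos_Ints_cases)

lemma sigma_holo: "sigma_ab \<alpha> \<beta> holomorphic_on {z. Im z > 0}"
  unfolding sigma_ab_def[abs_def]
  by (intro holomorphic_intros) (auto simp: complex_nonpos_Reals_iff power2_eq_square)

lemma Gamma_sig_holo:
  assumes "\<And>z. Im z > 0 \<Longrightarrow> Im (f z) \<noteq> 0" "f holomorphic_on {z. Im z > 0}"
  shows "(\<lambda>z. Gamma (f z)) holomorphic_on {z. Im z > 0}"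
  by (rule holomorphic_Gamma'[OF assms(2)]) (use assms(1) nonposInt_Im in auto)

lemma m_hat_analytic: "m_hat \<alpha> \<beta> analytic_on {z. Im z > 0}"
proof -
  define U where "U = {z. Im z > 0}"
  have op: "open U" unfolding U_def by (simp add: open_halfspace_Im_gt)
  define s where "s = sigma_ab \<alpha> \<beta>"
  have hs: "s holomorphic_on U" unfolding s_def U_def by (rule sigma_holo)
  have I: "Im (s z) > 0" if "Im z > 0" for z unfolding s_def using Im_sigma_pos that by auto
  have hc: "(\<lambda>z. (complex_of_real c + s z) / 2) holomorphic_on U"
     "(\<lambda>z. (complex_of_real c - s z) / 2) holomorphic_on U" for c
    using hs by (auto intro!: holomorphic_intros)
  have Ic: "Im ((complex_of_real c + s z) / 2) \<noteq> 0" "Im ((complex_of_real c - s z) / 2) \<noteq> 0"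
    if "Im z > 0" for c z using I[OF that] by auto
  define g1 where "g1 z = Gamma ((complex_of_real (1 + \<alpha> + \<beta>) + s z) / 2)" for z
  define g2 where "g2 z = Gamma ((complex_of_real (1 + \<alpha> + \<beta>) - s z) / 2)" for z
  define g3 where "g3 z = Gamma ((complex_of_real (1 + \<alpha> - \<beta>) + s z) / 2)" for z
  define g4 where "g4 z = Gamma ((complex_of_real (1 + \<alpha> - \<beta>) - s z) / 2)" for z
  have h1: "g1 holomorphic_on U" "g2 holomorphic_on U" "g3 holomorphic_on U" "g4 holomorphic_on U"
    unfolding g1_def[abs_def] g2_def[abs_def] g3_def[abs_def] g4_def[abs_def] U_def
    by (intro Gamma_sig_holo Ic hc[unfolded U_def]; assumption)+
  have nz: "g3 z * g4 z \<noteq> 0" if "z \<in> U" for z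
    unfolding g3_def g4_def using Ic that nonposInt_Im unfolding U_def by (auto simp: Gamma_eq_zero_iff)
  define C where "C = (- Gamma (complex_of_real (1 - \<beta>)) /
       (complex_of_real (2 powr (1 + \<alpha> + \<beta>) * \<beta>) * Gamma (complex_of_real (1 + \<beta>))))"
  have eq: "m_hat \<alpha> \<beta> = (\<lambda>z. C * (g1 z * g2 z) / (g3 z * g4 z))"
    unfolding m_hat_def[abs_def] C_def g1_def g2_def g3_def g4_def s_def by simp
  have "(\<lambda>z. C * (g1 z * g2 z) / (g3 z * g4 z)) holomorphic_on U"
    by (intro holomorphic_on_divide holomorphic_on_mult holomorphic_on_const h1 nz)
  thus ?thesis using op unfolding eq U_def[symmetric] by (simp add: analytic_on_open)
qed

lemma interlace_sum:
  fixes a b :: "nat \<Rightarrow> real" and f :: "real \<Rightarrow> real"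
  assumes mono: "\<And>x y. x < y \<Longrightarrow> f x < f y"
  and bnd: "\<And>x. \<bar>f x\<bar> < pi/2"
  and il1: "\<And>j. a j < b j" and il2: "\<And>j. b j < a (Suc j)"
  and sm: "summable (\<lambda>j. f (b j) - f (a j))"
  shows "0 < (\<Sum>j. f (b j) - f (a j)) \<and> (\<Sum>j. f (b j) - f (a j)) < pi"
proof
  show "0 < (\<Sum>j. f (b j) - f (a j))"
    by (rule suminf_pos[OF sm]) (use mono il1 in auto)
next
  define g where "g = f (a 1) - f (b 0)"
  have g0: "g > 0" unfolding g_def using mono il2[of 0] by simp
  have gpi: "g < pi" unfolding g_def using bnd[of "a 1"] bnd[of "b 0"] by linarith
  have claim: "(\<Sum>j<J. f (b j) - f (a j)) \<le> f (a J) - f (a 0) - (if J = 0 then 0 else g)" for J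
  proof (induction J)
    case 0 then show ?case by simp
  next
    case (Suc J)
    have "(\<Sum>j<Suc J. f (b j) - f (a j)) \<le> f (b J) - f (a 0) - (if J = 0 then 0 else g)"
      using Suc by simp
    also have "\<dots> \<le> f (a (Suc J)) - f (a 0) - g"
    proof (cases "J = 0")
      case True then show ?thesis unfolding g_def by simp
    next
      case False
      have "f (b J) < f (a (Suc J))" using mono il2 by blast
      thus ?thesis using False by simp
    qed
    finally show ?case by simp
  qed
  have "(\<Sum>j<J. f (b j) - f (a j)) \<le> pi - g" for J
  proof (cases "J = 0")
    case True then show ?thesis using gpi by simp
  next
    case False
    have "(\<Sum>j<J. f (b j) - f (a j)) \<le> f (a J) - f (a 0) - g" using claim[of J] False by simp
    also have "\<dots> \<le> pi - g" using bnd[of "a J"] bnd[of "a 0"] by linarith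
    finally show ?thesis .
  qed
  hence "(\<Sum>j. f (b j) - f (a j)) \<le> pi - g" by (intro suminf_le_const[OF sm]) auto
  thus "(\<Sum>j. f (b j) - f (a j)) < pi" using g0 by linarith
qed

lemma phi_mono: "Im z > 0 \<Longrightarrow> x < y \<Longrightarrow> phi z x < phi z y"
  unfolding phi_def by (intro arctan_monotone divide_strict_right_mono) auto

lemma phi_bnd: "\<bar>phi z x\<bar> < pi/2"
  unfolding phi_def abs_less_iff
  using arctan_lbound[of "(x - Re z) / Im z"] arctan_ubound[of "(x - Re z) / Im z"] by linarith

lemma mu_lam_next: "muv h b (Suc m) - lamv h m = (1 - b) * (2 * real m + 1 + (2*h - b))"
  by (simp add: lamv_def muv_def algebra_simps)

lemma lam_mu_next: "lamv h (Suc m) - muv h b m = (1 + b) * (2 * real m + 1 + (2*h - b))"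
  by (simp add: lamv_def muv_def algebra_simps)

lemma if_dir:
  fixes \<alpha> \<beta> :: real
  assumes b: "\<beta> \<in> {-1<..<0} \<union> {0<..<1}"
  and a: "(\<exists>n::nat. n \<ge> 1 \<and> \<alpha> = - real n) \<or> \<alpha> > -1"
  shows "nevanlinna_herglotz (m_hat \<alpha> \<beta>)"
  unfolding nevanlinna_herglotz_def
proof (intro conjI allI impI)
  show "m_hat \<alpha> \<beta> analytic_on {z. Im z > 0}" by (rule m_hat_analytic)
next
  fix z :: complex assume z: "Im z > 0"
  define h where "h = (1 + \<alpha> + \<beta>) / 2"
  define K where "K = Kc \<alpha> \<beta>"
  have h2: "2 * h = 1 + \<alpha> + \<beta>" unfolding h_def by simp
  define T where "T n = phi z (muv h \<beta> n) - phi z (lamv h n)" for n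
  obtain \<rho> where r: "\<rho> > 0" "Gr \<alpha> \<beta> z = complex_of_real \<rho> * cis (Theta h \<beta> z)"
    using Gr_rep[OF z, of \<alpha> \<beta>] unfolding h_def by blast
  have Im_eq: "Im (m_hat \<alpha> \<beta> z) = \<rho> * (K * sin (Theta h \<beta> z))"
    unfolding m_hat_eq r(2) K_def by (simp add: algebra_simps)
  obtain n0 :: nat where n0: "\<And>m. m \<ge> n0 \<Longrightarrow> 2 * real m + (1 + \<alpha>) > 0" and
     cancel: "(\<Sum>i<n0. T i) = 0"
  proof (cases "\<alpha> > -1")
    case True
    show ?thesis by (rule that[of 0]) (use True in auto)
  next
    case False
    then obtain n :: nat where n: "n \<ge> 1" "\<alpha> = - real n" using a by auto
    have hn: "2 * h = 1 - real n + \<beta>" unfolding h_def using n by simp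
    have mu_eq: "muv h \<beta> i = lamv h (n - Suc i)" if "i < n" for i
    proof -
      have e: "real (n - Suc i) = real n - real i - 1" using that by (simp add: of_nat_diff)
      have hh: "h = (1 - real n + \<beta>) / 2" using hn by simp
      show ?thesis unfolding muv_def lamv_def e hn by (simp add: algebra_simps)
    qed
    have "(\<Sum>i<n. T i) = (\<Sum>i<n. phi z (muv h \<beta> i)) - (\<Sum>i<n. phi z (lamv h i))"
      unfolding T_def by (simp add: sum_subtractf)
    also have "(\<Sum>i<n. phi z (muv h \<beta> i)) = (\<Sum>i<n. phi z (lamv h (n - Suc i)))"
      by (intro sum.cong refl) (simp add: mu_eq)
    also have "\<dots> = (\<Sum>i<n. phi z (lamv h i))"
      by (rule sum.nat_diff_reindex[where g = "\<lambda>i. phi z (lamv h i)"])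
    finally have c: "(\<Sum>i<n. T i) = 0" by simp
    show ?thesis by (rule that[of n]) (use n c in auto)
  qed
  have sT: "summable T" unfolding T_def by (rule summable_Theta[OF z])
  have Th: "Theta h \<beta> z = (\<Sum>j. T (j + n0))"
    using suminf_split_initial_segment[OF sT, of n0] cancel unfolding Theta_def T_def by simp
  have sT': "summable (\<lambda>j. T (j + n0))" by (rule summable_ignore_initial_segment[OF sT])
  have G1: "Gamma (1 - \<beta>) > 0" "Gamma (1 + \<beta>) > 0" using b by auto
  have "K * sin (Theta h \<beta> z) > 0"
  proof (cases "\<beta> > 0")
    case True
    hence b1: "0 < \<beta>" "\<beta> < 1" using b by auto
    have Kneg: "K < 0" unfolding K_def Kc_def using G1 b1
      by (simp add: divide_neg_pos)
    define aa where "aa j = muv h \<beta> (j + n0)" for j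
    define bb where "bb j = lamv h (j + n0)" for j
    have i1: "aa j < bb j" for j
    proof -
      have "bb j - aa j = \<beta> * (2 * real (j + n0) + 2*h - \<beta>)" unfolding aa_def bb_def by (rule lam_mu_diff)
      moreover have "2 * real (j + n0) + 2*h - \<beta> > 0" using n0[of "j + n0"] h2 by simp
      ultimately show ?thesis using b1 by (smt (verit) mult_pos_pos)
    qed
    have i2: "bb j < aa (Suc j)" for j
    proof -
      have "aa (Suc j) - bb j = (1 - \<beta>) * (2 * real (j + n0) + 1 + (2*h - \<beta>))"
        unfolding aa_def bb_def using mu_lam_next[of h \<beta> "j + n0"] by simp
      moreover have "2 * real (j + n0) + 1 + (2*h - \<beta>) > 0" using n0[of "j + n0"] h2 by simp
      ultimately show ?thesis using b1 by (smt (verit) mult_pos_pos)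
    qed
    have sm: "summable (\<lambda>j. phi z (bb j) - phi z (aa j))"
      using summable_minus[OF sT'] unfolding T_def aa_def bb_def by simp
    have IS: "0 < (\<Sum>j. phi z (bb j) - phi z (aa j)) \<and> (\<Sum>j. phi z (bb j) - phi z (aa j)) < pi"
      by (rule interlace_sum[OF phi_mono[OF z] phi_bnd i1 i2 sm])
    have "(\<Sum>j. phi z (bb j) - phi z (aa j)) = - Theta h \<beta> z"
      unfolding Th T_def aa_def bb_def using suminf_minus[OF sT'[unfolded T_def]] by simp
    hence "sin (- Theta h \<beta> z) > 0" using IS by (metis sin_gt_zero)
    hence "sin (Theta h \<beta> z) < 0" by simp
    thus ?thesis using Kneg by (simp add: mult_neg_neg)
  next
    case False
    hence b1: "-1 < \<beta>" "\<beta> < 0" using b by auto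
    have d1: "2 powr (1 + \<alpha> + \<beta>) * \<beta> < 0" using b1 by (intro mult_pos_neg) auto
    have d2: "2 powr (1 + \<alpha> + \<beta>) * \<beta> * Gamma (1 + \<beta>) < 0" by (rule mult_neg_pos[OF d1 G1(2)])
    have Kpos: "K > 0" unfolding K_def Kc_def using G1 d2
      by (intro divide_neg_neg) auto
    define aa where "aa j = lamv h (j + n0)" for j
    define bb where "bb j = muv h \<beta> (j + n0)" for j
    have i1: "aa j < bb j" for j
    proof -
      have "aa j - bb j = \<beta> * (2 * real (j + n0) + 2*h - \<beta>)" unfolding aa_def bb_def by (rule lam_mu_diff)
      moreover have "2 * real (j + n0) + 2*h - \<beta> > 0" using n0[of "j + n0"] h2 by simp
      ultimately show ?thesis using b1 by (smt (verit) mult_neg_pos)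
    qed
    have i2: "bb j < aa (Suc j)" for j
    proof -
      have "aa (Suc j) - bb j = (1 + \<beta>) * (2 * real (j + n0) + 1 + (2*h - \<beta>))"
        unfolding aa_def bb_def using lam_mu_next[of h "j + n0" \<beta>] by simp
      moreover have "2 * real (j + n0) + 1 + (2*h - \<beta>) > 0" using n0[of "j + n0"] h2 by simp
      ultimately show ?thesis using b1 by (smt (verit) mult_pos_pos)
    qed
    have sm: "summable (\<lambda>j. phi z (bb j) - phi z (aa j))"
      using sT' unfolding T_def aa_def bb_def by simp
    have IS: "0 < (\<Sum>j. phi z (bb j) - phi z (aa j)) \<and> (\<Sum>j. phi z (bb j) - phi z (aa j)) < pi"
      by (rule interlace_sum[OF phi_mono[OF z] phi_bnd i1 i2 sm])
    have "(\<Sum>j. phi z (bb j) - phi z (aa j)) = Theta h \<beta> z"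
      unfolding Th T_def aa_def bb_def by simp
    hence "sin (Theta h \<beta> z) > 0" using IS by (metis sin_gt_zero)
    thus ?thesis using Kpos by simp
  qed
  thus "Im (m_hat \<alpha> \<beta> z) > 0" unfolding Im_eq using r(1) by simp
qed

theorem theorem8p1:
  fixes \<alpha> \<beta> :: real
  assumes "\<beta> \<notin> \<int>"
  shows "nevanlinna_herglotz (m_hat \<alpha> \<beta>) \<longleftrightarrow>
           ((\<exists>n::nat. n \<ge> 1 \<and> \<alpha> = - real n) \<or> \<alpha> > -1) \<and>
           (\<beta> \<in> {-1<..<0} \<union> {0<..<1})"
proof
  assume H: "nevanlinna_herglotz (m_hat \<alpha> \<beta>)"
  show "((\<exists>n::nat. n \<ge> 1 \<and> \<alpha> = - real n) \<or> \<alpha> > -1) \<and> (\<beta> \<in> {-1<..<0} \<union> {0<..<1})"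
    by (rule only_if_dir[OF assms H])
next
  assume R: "((\<exists>n::nat. n \<ge> 1 \<and> \<alpha> = - real n) \<or> \<alpha> > -1) \<and> (\<beta> \<in> {-1<..<0} \<union> {0<..<1})"
  show "nevanlinna_herglotz (m_hat \<alpha> \<beta>)"
    using if_dir R by blast
qed

end
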